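(* Let $n\geqslant 3$, let $S$ be a caterpillar species tree with $n$ leaves, and let $G$ be a caterpillar gene tree on the same label set that differs from $S$ by $k\geqslant 1$ disjoint NNI moves, i.e. the canonical vector of $G$ is obtained from that of $S$ by exchanging the labels within each of $k$ pairwise disjoint position pairs, each pair being of the form $\{m,m+1\}$ with $2\leqslant m\leqslant n-1$ or equal to $\{1,3\}$. Then (i) the roadblock set $B_{G,S}$ consists of $k$ distinct points $(i_1,i_1),\dots,(i_k,i_k)$ with $0<i_1<\cdots<i_k<n-1$; and (ii) the number of coalescent histories for $(G,S)$ equals $$C_{n-1}+\sum_{\ell=1}^{k}(-1)^{\ell}\sum_{1\leqslant j_1<j_2<\cdots<j_\ell\leqslant k} C_{i_{j_1}}\,C_{i_{j_2}-i_{j_1}}\cdots C_{i_{j_\ell}-i_{j_{\ell-1}}}\,C_{n-1-i_{j_\ell}},$$ where $C_m=\frac{1}{m+1}\binom{2m}{m}$.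
   Context: All trees are binary, rooted, leaf-labeled. A caterpillar tree with $n$ leaves is one in which some internal node is descended from all other internal nodes. Its canonical label vector $(x_1,\dots,x_n)$ has $x_1,x_2$ the labels of the two cherry leaves and, for $3\leqslant i\leqslant n$, $x_i$ the label of the leaf separated from the root by $n-i+1$ edges; swapping $x_1,x_2$ gives the same tree. Internal nodes are numbered $1,\dots,n-1$ from cherry to root; internal edge $i$ is the edge above node $i$, with an extra edge $n-1$ above the root. A coalescent history for $(G,S)$ is a map $h$ from internal nodes of $G$ to internal edges of $S$ such that (1) every label of a leaf below node $v$ of $G$ labels a leaf of $S$ below edge $h(v)$, and (2) if $v_2$ is descended from $v_1$ in $G$ then $h(v_2)$ is descended from $h(v_1)$ (objects are descended from themselves). With $\mathbf g,\mathbf s$ the canonical vectors of $G,S$, $\sigma(x)$ the index of $x$ in $\mathbf s$ and $F(j)=\max\{\sigma(g_1),\dots,\sigma(g_{j+1})\}-1$, the roadblock set is $B_{G,S}=\{(i,j)\in\mathbb Z^2:1\leqslant j\leqslant i\leqslant n-1,\ i<F(j)\}$. *)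

theory Defs
  imports Complex_Main "HOL-Library.FuncSet"
begin

text \<open>Caterpillar trees are represented by their canonical label vectors, as lists
  (position p of the paper, 1-based, is list index p-1). Internal nodes and internal
  edges are numbered 1..n-1 from cherry to root.\<close>

text \<open>Set of labels of leaves below internal node v (equivalently below internal edge v)
  of the caterpillar with canonical vector xs: these are x_1,...,x_(v+1).\<close>
definition cat_below :: "'a list \<Rightarrow> nat \<Rightarrow> 'a set" where
  "cat_below xs v = set (take (v + 1) xs)"

text \<open>Coalescent histories for (G,S): maps h from internal nodes {1..n-1} of G to internal
  edges {1..n-1} of S (extensional).  Node v2 is descended from node v1 iff v2 \<le> v1, and
  edge e2 is descended from edge e1 iff e2 \<le> e1.\<close>
definition coal_hist :: "'a list \<Rightarrow> 'a list \<Rightarrow> (nat \<Rightarrow> nat) set" where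
  "coal_hist g s = {h \<in> {1..<length s} \<rightarrow>\<^sub>E {1..<length s}.
      (\<forall>v\<in>{1..<length s}. cat_below g v \<subseteq> cat_below s (h v)) \<and>
      (\<forall>v1\<in>{1..<length s}. \<forall>v2\<in>{1..<length s}. v2 \<le> v1 \<longrightarrow> h v2 \<le> h v1)}"

definition sigma :: "'a list \<Rightarrow> 'a \<Rightarrow> nat" where
  "sigma s x = (THE p. 1 \<le> p \<and> p \<le> length s \<and> s ! (p - 1) = x)"

definition Fmax :: "'a list \<Rightarrow> 'a list \<Rightarrow> nat \<Rightarrow> nat" where
  "Fmax g s j = Max (sigma s ` set (take (j + 1) g)) - 1"

definition roadblock :: "'a list \<Rightarrow> 'a list \<Rightarrow> (nat \<times> nat) set" where
  "roadblock g s = {(i, j). 1 \<le> j \<and> j \<le> i \<and> i \<le> length s - 1 \<and> i < Fmax g s j}"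

definition valid_nni_pairs :: "nat \<Rightarrow> nat set set \<Rightarrow> bool" where
  "valid_nni_pairs n P \<longleftrightarrow> finite P \<and>
     (\<forall>Q\<in>P. (\<exists>m. 2 \<le> m \<and> m \<le> n - 1 \<and> Q = {m, m + 1}) \<or> Q = {1, 3}) \<and>
     (\<forall>Q1\<in>P. \<forall>Q2\<in>P. Q1 \<noteq> Q2 \<longrightarrow> Q1 \<inter> Q2 = {})"

definition swap_pos :: "nat set set \<Rightarrow> nat \<Rightarrow> nat" where
  "swap_pos P p = (if \<exists>Q\<in>P. p \<in> Q then (THE q. \<exists>Q\<in>P. Q = {p, q} \<and> q \<noteq> p) else p)"

definition apply_nni :: "nat set set \<Rightarrow> 'a list \<Rightarrow> 'a list" where
  "apply_nni P s = map (\<lambda>i. s ! (swap_pos P (i + 1) - 1)) [0..<length s]"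

definition catalan :: "nat \<Rightarrow> real" where
  "catalan m = (1 / (real m + 1)) * real ((2 * m) choose m)"

definition chain_prod :: "nat \<Rightarrow> nat list \<Rightarrow> real" where
  "chain_prod n xs = (let ys = 0 # xs @ [n - 1] in
      \<Prod>t < length xs + 1. catalan (ys ! (t + 1) - ys ! t))"

end

theory Submission
  imports Defs
begin

definition seg :: "nat \<Rightarrow> nat \<Rightarrow> nat \<Rightarrow> (nat \<Rightarrow> nat) set" where
 "seg a b c = {h. h \<in> extensional {a<..b} \<and> (\<forall>v\<in>{a<..b}. v \<le> h v \<and> h v \<le> c) \<and>
    (\<forall>v1\<in>{a<..b}. \<forall>v2\<in>{a<..b}. v2 \<le> v1 \<longrightarrow> h v2 \<le> h v1)}"

definition ballot :: "nat \<Rightarrow> nat \<Rightarrow> int" where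
  "ballot m c = int ((c+m) choose m) - int ((c+m) choose Suc c)"

lemma finite_seg: "finite (seg a b c)"
proof -
  have "seg a b c \<subseteq> PiE {a<..b} (\<lambda>_. {0..c})"
    unfolding seg_def by (auto simp: PiE_iff extensional_def)
  then show ?thesis by (rule finite_subset) (simp add: finite_PiE)
qed

lemma seg_base: "seg a a c = {\<lambda>_. undefined}"
  unfolding seg_def by (auto simp: extensional_def)

lemma seg_top:
  assumes "a \<le> b" "Suc b \<le> c"
  shows "{h\<in>seg a (Suc b) c. h (Suc b) = c} = (\<lambda>h. h(Suc b := c)) ` seg a b c"
proof
  show "{h\<in>seg a (Suc b) c. h (Suc b) = c} \<subseteq> (\<lambda>h. h(Suc b := c)) ` seg a b c"
  proof
    fix h assume "h \<in> {h\<in>seg a (Suc b) c. h (Suc b) = c}"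
    then have h: "h \<in> seg a (Suc b) c" "h (Suc b) = c" by auto
    have "h(Suc b := undefined) \<in> seg a b c"
      using h assms unfolding seg_def
      by (auto simp: extensional_def)
    moreover have "h = (h(Suc b := undefined))(Suc b := c)" using h by auto
    ultimately show "h \<in> (\<lambda>h. h(Suc b := c)) ` seg a b c" by blast
  qed
next
  show "(\<lambda>h. h(Suc b := c)) ` seg a b c \<subseteq> {h\<in>seg a (Suc b) c. h (Suc b) = c}"
  proof
    fix x assume "x \<in> (\<lambda>h. h(Suc b := c)) ` seg a b c"
    then obtain h where h: "h \<in> seg a b c" "x = h(Suc b := c)" by blast
    show "x \<in> {h\<in>seg a (Suc b) c. h (Suc b) = c}"
      using h assms unfolding seg_def
      by (auto simp: extensional_def)
  qed
qed

lemma seg_top_inj: "inj_on (\<lambda>h. h(Suc b := c)) (seg a b c)"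
proof (rule inj_onI)
  fix f g assume f: "f \<in> seg a b c" and g: "g \<in> seg a b c" and e: "f(Suc b := c) = g(Suc b := c)"
  show "f = g"
  proof
    fix x show "f x = g x"
    proof (cases "x = Suc b")
      case True
      then show ?thesis using f g unfolding seg_def by (auto simp: extensional_def)
    next
      case False
      then show ?thesis using fun_cong[OF e, of x] by auto
    qed
  qed
qed

lemma seg_lower:
  assumes "Suc b \<le> c" "a \<le> b"
  shows "{h\<in>seg a (Suc b) (Suc c). h (Suc b) \<noteq> Suc c} = seg a (Suc b) c"
proof
  show "{h\<in>seg a (Suc b) (Suc c). h (Suc b) \<noteq> Suc c} \<subseteq> seg a (Suc b) c"
  proof
    fix h assume "h \<in> {h\<in>seg a (Suc b) (Suc c). h (Suc b) \<noteq> Suc c}"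
    then have h: "h \<in> extensional {a<..Suc b}" "\<forall>v\<in>{a<..Suc b}. v \<le> h v \<and> h v \<le> Suc c"
      "\<forall>v1\<in>{a<..Suc b}. \<forall>v2\<in>{a<..Suc b}. v2 \<le> v1 \<longrightarrow> h v2 \<le> h v1" "h (Suc b) \<noteq> Suc c"
      unfolding seg_def by auto
    have sb: "Suc b \<in> {a<..Suc b}" using assms by auto
    have "h (Suc b) \<le> c" using h(2,4) sb by fastforce
    then have "\<forall>v\<in>{a<..Suc b}. h v \<le> c" using h(3) sb by (meson greaterThanAtMost_iff order_trans)
    then show "h \<in> seg a (Suc b) c" using h unfolding seg_def by auto
  qed
next
  show "seg a (Suc b) c \<subseteq> {h\<in>seg a (Suc b) (Suc c). h (Suc b) \<noteq> Suc c}"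
  proof
    fix h assume h: "h \<in> seg a (Suc b) c"
    have sb: "Suc b \<in> {a<..Suc b}" using assms by auto
    have "h (Suc b) \<le> c" using h sb unfolding seg_def by blast
    then show "h \<in> {h\<in>seg a (Suc b) (Suc c). h (Suc b) \<noteq> Suc c}"
      using h unfolding seg_def by auto
  qed
qed

lemma card_seg_split:
  assumes "a \<le> b" "Suc b \<le> c"
  shows "card (seg a (Suc b) (Suc c)) = card (seg a (Suc b) c) + card (seg a b (Suc c))"
proof -
  have "seg a (Suc b) (Suc c) = {h\<in>seg a (Suc b) (Suc c). h (Suc b) \<noteq> Suc c} \<union> {h\<in>seg a (Suc b) (Suc c). h (Suc b) = Suc c}"
    by auto
  then have "card (seg a (Suc b) (Suc c)) = card {h\<in>seg a (Suc b) (Suc c). h (Suc b) \<noteq> Suc c} + card {h\<in>seg a (Suc b) (Suc c). h (Suc b) = Suc c}"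
    by (metis (no_types, lifting) card_Un_disjoint disjoint_iff finite_Un finite_seg mem_Collect_eq)
  also have "\<dots> = card (seg a (Suc b) c) + card (seg a b (Suc c))"
    using seg_lower[OF assms(2,1)] seg_top[of a b "Suc c"] assms card_image[OF seg_top_inj] by simp
  finally show ?thesis .
qed

lemma card_seg_diag:
  assumes "a \<le> b"
  shows "card (seg a (Suc b) (Suc b)) = card (seg a b (Suc b))"
proof -
  have "seg a (Suc b) (Suc b) = {h\<in>seg a (Suc b) (Suc b). h (Suc b) = Suc b}"
  proof safe
    fix h assume "h \<in> seg a (Suc b) (Suc b)"
    then have "Suc b \<le> h (Suc b) \<and> h (Suc b) \<le> Suc b" unfolding seg_def using assms by auto
    then show "h (Suc b) = Suc b" by simp
  qed
  then show ?thesis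
    using seg_top[of a b "Suc b"] assms card_image[OF seg_top_inj] by simp
qed

lemma ballot_pascal: "ballot (Suc d) (Suc c) = ballot (Suc d) c + ballot d (Suc c)"
proof -
  have 1: "Suc c + Suc d = Suc (c + Suc d)" "Suc c + d = c + Suc d" by simp_all
  show ?thesis unfolding ballot_def 1 binomial_Suc_Suc by simp
qed

lemma ballot_diag_step: "ballot (Suc d) (Suc d) = ballot d (Suc d)"
proof -
  have 1: "Suc d + Suc d = Suc (Suc d + d)" by simp
  show ?thesis unfolding ballot_def 1 binomial_Suc_Suc by simp
qed

lemma ballot_diag: "real_of_int (ballot m m) = catalan m"
proof -
  have e: "Suc m * ((2*m) choose Suc m) = m * ((2*m) choose m)"
  proof (cases m)
    case 0 then show ?thesis by simp
  next
    case (Suc m')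
    then show ?thesis using Suc_times_binomial_add[of m m'] by (simp add: mult_2)
  qed
  have e2: "(real m + 1) * real ((2*m) choose Suc m) = real m * real ((2*m) choose m)"
    using arg_cong[OF e, of real] by (simp add: algebra_simps)
  have "real_of_int (ballot m m) = real ((2*m) choose m) - real ((2*m) choose Suc m)"
    by (simp add: ballot_def mult_2)
  also have "\<dots> = real ((2*m) choose m) / (real m + 1)"
    using e2 by (simp add: field_simps)
  finally show ?thesis by (simp add: catalan_def)
qed

lemma card_seg_ballot: "int (card (seg a (a+d) (a+d+e))) = ballot d (d+e)"
proof (induction d arbitrary: e)
  case 0
  then show ?case by (simp add: seg_base ballot_def)
next
  case (Suc d)
  note outer = Suc.IH
  show ?case
  proof (induction e)
    case 0
    have "card (seg a (a + Suc d) (a + Suc d + 0)) = card (seg a (a+d) (a + d + 1))"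
      using card_seg_diag[of a "a+d"] by simp
    also have "int \<dots> = ballot d (d+1)" using outer[of 1] by simp
    also have "\<dots> = ballot (Suc d) (Suc d + 0)"
      using ballot_diag_step[of d] by simp
    finally show ?case .
  next
    case (Suc e)
    have "card (seg a (a + Suc d) (a + Suc d + Suc e)) =
       card (seg a (a + Suc d) (a + Suc d + e)) + card (seg a (a+d) (a + d + Suc (Suc e)))"
      using card_seg_split[of a "a+d" "a+d+Suc e"] by simp
    then have "int (card (seg a (a + Suc d) (a + Suc d + Suc e))) = ballot (Suc d) (Suc d + e) + ballot d (d + Suc (Suc e))"
      using outer[of "Suc (Suc e)"] Suc.IH by (simp only: of_nat_add add_Suc_right add_0_right)
    also have "\<dots> = ballot (Suc d) (Suc d + Suc e)"
      using ballot_pascal[of d "Suc d + e"] by simp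
    finally show ?case .
  qed
qed

lemma card_seg_catalan: "a \<le> b \<Longrightarrow> real (card (seg a b b)) = catalan (b - a)"
proof -
  assume "a \<le> b"
  then obtain d where "b = a + d" using le_Suc_ex by blast
  then show ?thesis using card_seg_ballot[of a d 0] ballot_diag[of d]
    by (metis add_0_right diff_add_inverse of_int_of_nat_eq)
qed

fun gp :: "nat \<Rightarrow> nat \<Rightarrow> nat list \<Rightarrow> real" where
  "gp a b [] = catalan (b - a)"
| "gp a b (x # xs) = catalan (x - a) * gp x b xs"

lemma chain_gp: "(\<Prod>t<length xs + 1. catalan ((a#xs@[b])!(t+1) - (a#xs@[b])!t)) = gp a b xs"
proof (induction xs arbitrary: a)
  case Nil
  then show ?case by simp
next
  case (Cons x xs)
  have l: "length (x#xs) + 1 = Suc (length xs + 1)" by simp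
  have "(\<Prod>t<length (x#xs) + 1. catalan ((a#(x#xs)@[b])!(t+1) - (a#(x#xs)@[b])!t))
     = catalan ((a#(x#xs)@[b])!(0+1) - (a#(x#xs)@[b])!0) * (\<Prod>t<length xs + 1. catalan ((a#(x#xs)@[b])!(Suc t+1) - (a#(x#xs)@[b])!(Suc t)))"
    unfolding l by (rule prod.lessThan_Suc_shift)
  also have "\<dots> = catalan (x - a) * (\<Prod>t<length xs + 1. catalan ((x#xs@[b])!(t+1) - (x#xs@[b])!t))"
    by simp
  also have "\<dots> = catalan (x - a) * gp x b xs" by (simp only: Cons.IH)
  finally show ?case by (simp only: gp.simps)
qed

lemma chain_prod_gp: "chain_prod n xs = gp 0 (n - 1) xs"
  unfolding chain_prod_def Let_def using chain_gp[where xs=xs and a=0 and b="n - 1"] by simp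

lemma segI:
  assumes "h \<in> extensional {a<..b}" "\<And>v. a < v \<Longrightarrow> v \<le> b \<Longrightarrow> v \<le> h v"
    "\<And>v. a < v \<Longrightarrow> v \<le> b \<Longrightarrow> h v \<le> c"
    "\<And>v1 v2. a < v2 \<Longrightarrow> v2 \<le> v1 \<Longrightarrow> v1 \<le> b \<Longrightarrow> h v2 \<le> h v1"
  shows "h \<in> seg a b c"
  using assms unfolding seg_def by auto

lemma segD:
  assumes "h \<in> seg a b c"
  shows "h \<in> extensional {a<..b}" "\<And>v. a < v \<Longrightarrow> v \<le> b \<Longrightarrow> v \<le> h v"
    "\<And>v. a < v \<Longrightarrow> v \<le> b \<Longrightarrow> h v \<le> c"
    "\<And>v1 v2. a < v2 \<Longrightarrow> v2 \<le> v1 \<Longrightarrow> v1 \<le> b \<Longrightarrow> h v2 \<le> h v1"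
  using assms unfolding seg_def by auto

lemma card_fix:
  assumes "sorted_wrt (<) xs" "\<forall>x\<in>set xs. a < x \<and> x \<le> b" "a \<le> b"
  shows "real (card {h\<in>seg a b b. \<forall>x\<in>set xs. h x = x}) = gp a b xs"
  using assms
proof (induction xs arbitrary: a)
  case Nil
  then show ?case using card_seg_catalan[of a b] by simp
next
  case (Cons x rest)
  define A where "A = {h\<in>seg a b b. \<forall>y\<in>set (x#rest). h y = y}"
  define B2 where "B2 = {h\<in>seg x b b. \<forall>y\<in>set rest. h y = y}"
  define \<phi> where "\<phi> = (\<lambda>h::nat\<Rightarrow>nat. (restrict h {a<..x}, restrict h {x<..b}))"
  define \<psi> where "\<psi> = (\<lambda>(h1::nat\<Rightarrow>nat, h2::nat\<Rightarrow>nat). (\<lambda>v. if v \<in> {a<..x} then h1 v else h2 v))"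
  have ax: "a < x" "x \<le> b" using Cons.prems by auto
  have rest: "\<forall>y\<in>set rest. x < y \<and> y \<le> b" using Cons.prems by auto
  have bij: "bij_betw \<phi> A (seg a x x \<times> B2)"
  proof (rule bij_betw_byWitness[where f'=\<psi>])
    show "\<forall>h\<in>A. \<psi> (\<phi> h) = h"
    proof
      fix h assume "h \<in> A"
      then have "h \<in> extensional {a<..b}" unfolding A_def seg_def by auto
      then show "\<psi> (\<phi> h) = h" unfolding \<phi>_def \<psi>_def using ax
        by (auto simp: extensional_def restrict_def fun_eq_iff)
    qed
    show "\<forall>p\<in>seg a x x \<times> B2. \<phi> (\<psi> p) = p"
    proof
      fix p assume "p \<in> seg a x x \<times> B2"
      then obtain h1 h2 where p: "p = (h1, h2)" "h1 \<in> seg a x x" "h2 \<in> seg x b b"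
        unfolding B2_def by auto
      then have "h1 \<in> extensional {a<..x}" "h2 \<in> extensional {x<..b}" unfolding seg_def by auto
      then show "\<phi> (\<psi> p) = p" unfolding \<phi>_def \<psi>_def p using ax
        by (auto simp: extensional_def restrict_def fun_eq_iff)
    qed
    show "\<phi> ` A \<subseteq> seg a x x \<times> B2"
    proof
      fix q assume "q \<in> \<phi> ` A"
      then obtain h where h: "h \<in> A" "q = \<phi> h" by blast
      have hx: "h x = x" using h(1) unfolding A_def by auto
      have hs: "h \<in> seg a b b" "\<forall>y\<in>set rest. h y = y" using h(1) unfolding A_def by auto
      note D = segD[OF hs(1)]
      have "restrict h {a<..x} \<in> seg a x x"
      proof (rule segI)
        show "restrict h {a<..x} \<in> extensional {a<..x}" by simp
        fix v assume v: "a < v" "v \<le> x"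
        then show "v \<le> restrict h {a<..x} v" using D(2)[of v] ax by simp
        have "h v \<le> h x" using D(4)[of v x] v ax by simp
        then show "restrict h {a<..x} v \<le> x" using v hx by simp
      next
        fix v1 v2 assume "a < v2" "v2 \<le> v1" "v1 \<le> x"
        then show "restrict h {a<..x} v2 \<le> restrict h {a<..x} v1" using D(4)[of v2 v1] ax by simp
      qed
      moreover have "restrict h {x<..b} \<in> seg x b b"
      proof (rule segI)
        show "restrict h {x<..b} \<in> extensional {x<..b}" by simp
        fix v assume v: "x < v" "v \<le> b"
        then show "v \<le> restrict h {x<..b} v" using D(2)[of v] ax by simp
        show "restrict h {x<..b} v \<le> b" using D(3)[of v] v ax by simp
      next
        fix v1 v2 assume "x < v2" "v2 \<le> v1" "v1 \<le> b"
        then show "restrict h {x<..b} v2 \<le> restrict h {x<..b} v1" using D(4)[of v2 v1] ax by simp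
      qed
      moreover have "\<forall>y\<in>set rest. restrict h {x<..b} y = y" using hs(2) rest by simp
      ultimately show "q \<in> seg a x x \<times> B2" unfolding h(2) \<phi>_def B2_def by simp
    qed
    show "\<psi> ` (seg a x x \<times> B2) \<subseteq> A"
    proof
      fix q assume "q \<in> \<psi> ` (seg a x x \<times> B2)"
      then obtain h1 h2 where q: "q = \<psi> (h1, h2)" "h1 \<in> seg a x x" "h2 \<in> seg x b b"
        "\<forall>y\<in>set rest. h2 y = y"
        unfolding B2_def by auto
      note D1 = segD[OF q(2)] and D2 = segD[OF q(3)]
      have h1x: "h1 x = x" using D1(2)[of x] D1(3)[of x] ax by simp
      have qv: "q v = (if a < v \<and> v \<le> x then h1 v else h2 v)" for v
        unfolding q \<psi>_def by simp
      have "q \<in> seg a b b"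
      proof (rule segI)
        show "q \<in> extensional {a<..b}"
          using D1(1) D2(1) ax unfolding extensional_def qv by auto
        fix v assume v: "a < v" "v \<le> b"
        show "v \<le> q v" using D1(2)[of v] D2(2)[of v] v unfolding qv by auto
        show "q v \<le> b" using D1(3)[of v] D2(3)[of v] v ax unfolding qv by auto
      next
        fix v1 v2 assume v: "a < v2" "v2 \<le> v1" "v1 \<le> b"
        show "q v2 \<le> q v1"
        proof (cases "v1 \<le> x")
          case True
          then show ?thesis using D1(4)[of v2 v1] v unfolding qv by auto
        next
          case False
          show ?thesis
          proof (cases "v2 \<le> x")
            case True
            then have "h1 v2 \<le> x" using D1(3)[of v2] v by simp
            moreover have "v1 \<le> h2 v1" using D2(2)[of v1] v False by simp
            ultimately show ?thesis using True False v unfolding qv by auto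
          next
            case False2: False
            then show ?thesis using D2(4)[of v2 v1] v False unfolding qv by auto
          qed
        qed
      qed
      moreover have "\<forall>y\<in>set (x#rest). q y = y"
        using h1x q(4) rest ax unfolding qv by auto
      ultimately show "q \<in> A" unfolding A_def by simp
    qed
  qed
  have "card A = card (seg a x x) * card B2"
    using bij_betw_same_card[OF bij] by (simp add: card_cartesian_product)
  moreover have "real (card B2) = gp x b rest"
    unfolding B2_def using Cons.IH[of x] Cons.prems rest ax by simp
  moreover have "real (card (seg a x x)) = catalan (x - a)"
    using card_seg_catalan[of a x] ax by simp
  ultimately show ?case unfolding A_def by simp
qed

context
  fixes n :: nat and P :: "nat set set"
  assumes n3: "n \<ge> 3" and vp: "valid_nni_pairs n P"
begin

lemma pair_form:
  assumes "Q \<in> P"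
  obtains a b where "Q = {a, b}" "1 \<le> a" "a < b" "b \<le> n" "(b = a + 1 \<and> 2 \<le> a) \<or> (a = 1 \<and> b = 3)"
proof -
  from vp assms have "(\<exists>m. 2 \<le> m \<and> m \<le> n - 1 \<and> Q = {m, m + 1}) \<or> Q = {1, 3}"
    unfolding valid_nni_pairs_def by blast
  then show ?thesis
  proof
    assume "\<exists>m. 2 \<le> m \<and> m \<le> n - 1 \<and> Q = {m, m + 1}"
    then obtain m where "2 \<le> m" "m \<le> n - 1" "Q = {m, m + 1}" by blast
    then show ?thesis using that[of m "m+1"] n3 by auto
  next
    assume "Q = {1, 3}"
    then show ?thesis using that[of 1 3] n3 by auto
  qed
qed

lemma pairs_disj: "Q1 \<in> P \<Longrightarrow> Q2 \<in> P \<Longrightarrow> x \<in> Q1 \<Longrightarrow> x \<in> Q2 \<Longrightarrow> Q1 = Q2"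
  using vp unfolding valid_nni_pairs_def by blast

lemma swap_other:
  assumes Q: "Q \<in> P" "p \<in> Q" "q \<in> Q" "p \<noteq> q"
  shows "swap_pos P p = q"
proof -
  obtain a b where ab: "Q = {a, b}" "a < b" using pair_form[OF Q(1)] by metis
  have Qpq: "Q = {p, q}" using ab Q by auto
  have "(THE q. \<exists>Q\<in>P. Q = {p, q} \<and> q \<noteq> p) = q"
  proof (rule the_equality)
    show "\<exists>Q\<in>P. Q = {p, q} \<and> q \<noteq> p" using Q Qpq by auto
  next
    fix q' assume "\<exists>Q'\<in>P. Q' = {p, q'} \<and> q' \<noteq> p"
    then obtain Q' where "Q' \<in> P" "Q' = {p, q'}" "q' \<noteq> p" by blast
    moreover then have "Q' = Q" using pairs_disj[of Q' Q p] Q by auto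
    ultimately show "q' = q" using Qpq by (metis doubleton_eq_iff)
  qed
  then show ?thesis unfolding swap_pos_def using Q by auto
qed

lemma swap_none: "(\<forall>Q\<in>P. p \<notin> Q) \<Longrightarrow> swap_pos P p = p"
  unfolding swap_pos_def by auto

lemma swap_range: "p \<in> {1..n} \<Longrightarrow> swap_pos P p \<in> {1..n}"
proof (cases "\<exists>Q\<in>P. p \<in> Q")
  case True
  then obtain Q where Q: "Q \<in> P" "p \<in> Q" by blast
  then obtain a b where ab: "Q = {a, b}" "1 \<le> a" "a < b" "b \<le> n" using pair_form by metis
  show ?thesis
  proof (cases "p = a")
    case True
    then show ?thesis using swap_other[OF Q(1), of p b] Q ab by auto
  next
    case False
    then show ?thesis using swap_other[OF Q(1), of p a] Q ab by auto
  qed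
qed (simp add: swap_none)

lemma swap_invol: "swap_pos P (swap_pos P p) = p"
proof (cases "\<exists>Q\<in>P. p \<in> Q")
  case True
  then obtain Q where Q: "Q \<in> P" "p \<in> Q" by blast
  then obtain a b where ab: "Q = {a, b}" "a < b" using pair_form by metis
  show ?thesis
  proof (cases "p = a")
    case True
    then show ?thesis using swap_other[OF Q(1), of p b] swap_other[OF Q(1), of b p] Q ab by auto
  next
    case False
    then show ?thesis using swap_other[OF Q(1), of p a] swap_other[OF Q(1), of a p] Q ab by auto
  qed
qed (simp add: swap_none)

lemma swap_inj: "inj_on (swap_pos P) A"
  by (metis inj_onI swap_invol)

lemma swap_bound: "p \<ge> 1 \<Longrightarrow> swap_pos P p \<le> max (p + 1) 3"
proof (cases "\<exists>Q\<in>P. p \<in> Q")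
  case True
  then obtain Q where Q: "Q \<in> P" "p \<in> Q" by blast
  then obtain a b where ab: "Q = {a, b}" "1 \<le> a" "a < b" "b \<le> n" "(b = a + 1 \<and> 2 \<le> a) \<or> (a = 1 \<and> b = 3)"
    using pair_form by metis
  show ?thesis
  proof (cases "p = a")
    case True
    then show ?thesis using swap_other[OF Q(1), of p b] Q ab by auto
  next
    case False
    then show ?thesis using swap_other[OF Q(1), of p a] Q ab by auto
  qed
qed (simp add: swap_none)

definition RB :: "nat set" where "RB = (\<lambda>Q. Max Q - 2) ` P"

lemma RB_range: "RB \<subseteq> {1..n-2}"
proof
  fix j assume "j \<in> RB"
  then obtain Q where Q: "Q \<in> P" "j = Max Q - 2" unfolding RB_def by blast
  then obtain a b where ab: "Q = {a, b}" "1 \<le> a" "a < b" "b \<le> n" "(b = a + 1 \<and> 2 \<le> a) \<or> (a = 1 \<and> b = 3)"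
    using pair_form by metis
  have "Max Q = b" using ab by (simp add: max_def)
  then show "j \<in> {1..n-2}" using Q ab by auto
qed

lemma finite_P: "finite P" using vp unfolding valid_nni_pairs_def by blast

lemma card_RB: "card RB = card P"
proof -
  have "inj_on (\<lambda>Q. Max Q - 2) P"
  proof (rule inj_onI)
    fix Q1 Q2 assume Q: "Q1 \<in> P" "Q2 \<in> P" "Max Q1 - 2 = Max Q2 - 2"
    obtain a1 b1 where 1: "Q1 = {a1, b1}" "1 \<le> a1" "a1 < b1" "(b1 = a1 + 1 \<and> 2 \<le> a1) \<or> (a1 = 1 \<and> b1 = 3)"
      using pair_form[OF Q(1)] by metis
    obtain a2 b2 where 2: "Q2 = {a2, b2}" "1 \<le> a2" "a2 < b2" "(b2 = a2 + 1 \<and> 2 \<le> a2) \<or> (a2 = 1 \<and> b2 = 3)"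
      using pair_form[OF Q(2)] by metis
    have "Max Q1 = b1" "Max Q2 = b2" using 1 2 by (simp_all add: max_def)
    then have "b1 = b2" using Q 1 2 by auto
    then show "Q1 = Q2" using pairs_disj[OF Q(1,2), of b1] 1 2 by auto
  qed
  then show ?thesis unfolding RB_def by (simp add: card_image)
qed

lemma RB_char:
  assumes "j \<ge> 1"
  shows "j + 2 \<in> swap_pos P ` {1..j+1} \<longleftrightarrow> j \<in> RB"
proof
  assume "j + 2 \<in> swap_pos P ` {1..j+1}"
  then obtain p where p0: "p \<in> {1..j+1}" "j + 2 = swap_pos P p" by blast
  then have p: "p \<in> {1..j+1}" "swap_pos P p = j + 2" by auto
  then have "\<exists>Q\<in>P. p \<in> Q" using swap_none by fastforce
  then obtain Q where Q: "Q \<in> P" "p \<in> Q" by blast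
  then obtain a b where ab: "Q = {a, b}" "a < b" using pair_form by metis
  have "p = a \<and> b = j + 2"
  proof (cases "p = a")
    case True
    then show ?thesis using swap_other[OF Q(1), of p b] Q ab p by auto
  next
    case False
    then show ?thesis using swap_other[OF Q(1), of p a] Q ab p by auto
  qed
  then have "Max Q = j + 2" using ab by (simp add: max_def)
  then show "j \<in> RB" unfolding RB_def using Q by force
next
  assume "j \<in> RB"
  then obtain Q where Q: "Q \<in> P" "j = Max Q - 2" unfolding RB_def by blast
  then obtain a b where ab: "Q = {a, b}" "1 \<le> a" "a < b" "b \<le> n" "(b = a + 1 \<and> 2 \<le> a) \<or> (a = 1 \<and> b = 3)"
    using pair_form by metis
  have "Max Q = b" using ab by (simp add: max_def)
  then have "b = j + 2" using Q ab by auto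
  moreover have "swap_pos P a = b" using swap_other[OF Q(1), of a b] ab by auto
  ultimately show "j + 2 \<in> swap_pos P ` {1..j+1}" using ab by force
qed

lemma Max_img:
  assumes "1 \<le> j" "j \<le> n - 1"
  shows "Max (swap_pos P ` {1..j+1}) = (if j \<in> RB then j + 2 else j + 1)"
proof -
  let ?S = "swap_pos P ` {1..j+1}"
  have sub: "?S \<subseteq> {1..j+2}"
  proof
    fix q assume "q \<in> ?S"
    then obtain p where p: "p \<in> {1..j+1}" "q = swap_pos P p" by blast
    have "q \<in> {1..n}" using swap_range[of p] p assms by auto
    moreover have "q \<le> max (p+1) 3" using swap_bound[of p] p by auto
    ultimately show "q \<in> {1..j+2}" using p assms by auto
  qed
  have cardS: "card ?S = j + 1" using card_image[OF swap_inj] by simp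
  show ?thesis
  proof (cases "j \<in> RB")
    case True
    then have "j + 2 \<in> ?S" using RB_char assms by blast
    then have "Max ?S = j + 2" using sub by (intro Max_eqI) auto
    then show ?thesis using True by simp
  next
    case False
    then have "j + 2 \<notin> ?S" using RB_char assms by blast
    have "?S \<subseteq> {1..j+1}"
    proof
      fix q assume q: "q \<in> ?S"
      have "q \<in> {1..j+2}" using sub q by blast
      moreover have "q \<noteq> j+2" using q \<open>j + 2 \<notin> ?S\<close> by metis
      ultimately show "q \<in> {1..j+1}" by auto
    qed
    then have "?S = {1..j+1}" using cardS by (intro card_subset_eq) auto
    moreover have "Max {1..j+1} = j + 1" by (rule Max_eqI) auto
    ultimately show ?thesis using False by simp
  qed
qed

end

lemma set_take_nth: "m \<le> length xs \<Longrightarrow> set (take m xs) = (\<lambda>p. xs!(p-1)) ` {1..m}"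
proof -
  assume m: "m \<le> length xs"
  have "x \<in> set (take m xs) \<longleftrightarrow> x \<in> (\<lambda>i. xs ! i) ` {..<m}" for x
    using m by (auto simp: in_set_conv_nth)
  then have "set (take m xs) = (\<lambda>i. xs ! i) ` {..<m}" by blast
  also have "\<dots> = (\<lambda>p. xs!(p-1)) ` {1..m}"
  proof safe
    fix i assume "i < m" then show "xs ! i \<in> (\<lambda>p. xs!(p-1)) ` {1..m}"
      by (intro image_eqI[of _ _ "Suc i"]) auto
  next
    fix p assume "p \<in> {1..m}" then show "xs!(p-1) \<in> (\<lambda>i. xs ! i) ` {..<m}" by auto
  qed
  finally show ?thesis .
qed

lemma inj_image_subset_iff:
  assumes "inj_on f C" "A \<subseteq> C" "B \<subseteq> C"
  shows "f ` A \<subseteq> f ` B \<longleftrightarrow> A \<subseteq> B"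
proof
  assume "f ` A \<subseteq> f ` B"
  then show "A \<subseteq> B" using assms inj_on_image_mem_iff by (metis image_subset_iff subset_iff)
qed auto

context
  fixes n :: nat and P :: "nat set set" and s :: "'a list"
  assumes n3: "n \<ge> 3" and vp: "valid_nni_pairs n P" and ls: "length s = n" and ds: "distinct s"
begin

lemma g_len: "length (apply_nni P s) = n"
  unfolding apply_nni_def using ls by simp

lemma g_nth: "p \<in> {1..n} \<Longrightarrow> apply_nni P s ! (p-1) = s!(swap_pos P p - 1)"
  unfolding apply_nni_def using ls by auto

lemma sigma_nth: "q \<in> {1..n} \<Longrightarrow> sigma s (s!(q-1)) = q"
  unfolding sigma_def
proof (rule the_equality)
  assume "q \<in> {1..n}" then show "1 \<le> q \<and> q \<le> length s \<and> s ! (q - 1) = s ! (q - 1)" using ls by auto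
next
  fix p assume q: "q \<in> {1..n}" and p: "1 \<le> p \<and> p \<le> length s \<and> s ! (p - 1) = s ! (q - 1)"
  then have "p - 1 = q - 1" using ds ls nth_eq_iff_index_eq[of s "p-1" "q-1"] by auto
  then show "p = q" using p q by auto
qed

lemma sigma_take: "j + 1 \<le> n \<Longrightarrow> sigma s ` set (take (j+1) (apply_nni P s)) = swap_pos P ` {1..j+1}"
proof -
  assume j: "j + 1 \<le> n"
  have "set (take (j+1) (apply_nni P s)) = (\<lambda>p. apply_nni P s ! (p-1)) ` {1..j+1}"
    using set_take_nth[of "j+1" "apply_nni P s"] g_len j by simp
  also have "\<dots> = (\<lambda>p. s!(swap_pos P p - 1)) ` {1..j+1}"
    using g_nth j by (intro image_cong) auto
  finally have 1: "set (take (j+1) (apply_nni P s)) = (\<lambda>p. s!(swap_pos P p - 1)) ` {1..j+1}" .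
  have "sigma s ` set (take (j+1) (apply_nni P s)) = (\<lambda>p. sigma s (s!(swap_pos P p - 1))) ` {1..j+1}"
    unfolding 1 image_image by simp
  also have "\<dots> = swap_pos P ` {1..j+1}"
    using sigma_nth swap_range[OF n3 vp] j by (intro image_cong) auto
  finally show ?thesis .
qed

lemma Fmax_val: "j \<in> {1..n-1} \<Longrightarrow> Fmax (apply_nni P s) s j = (if j \<in> RB P then j + 1 else j)"
  unfolding Fmax_def using sigma_take[of j] Max_img[OF n3 vp, of j] by auto

lemma roadblock_val: "roadblock (apply_nni P s) s = (\<lambda>j. (j, j)) ` RB P"
proof safe
  fix i j assume "(i, j) \<in> roadblock (apply_nni P s) s"
  then have ij: "1 \<le> j" "j \<le> i" "i \<le> n - 1" "i < Fmax (apply_nni P s) s j"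
    unfolding roadblock_def using ls by auto
  then have "i < (if j \<in> RB P then j + 1 else j)" using Fmax_val[of j] by auto
  then have "j \<in> RB P" "i = j" using ij by (auto split: if_splits)
  then show "(i, j) \<in> (\<lambda>j. (j, j)) ` RB P" by auto
next
  fix j assume j: "j \<in> RB P"
  then have "j \<in> {1..n-2}" using RB_range[OF n3 vp] by auto
  then have "j \<in> {1..n-1}" "j \<le> n - 1" by auto
  then have "Fmax (apply_nni P s) s j = j + 1" using Fmax_val[of j] j by auto
  then show "(j, j) \<in> roadblock (apply_nni P s) s"
    unfolding roadblock_def using ls \<open>j \<in> {1..n-2}\<close> by auto
qed

lemma cat_below_iff:
  assumes v: "v \<in> {1..n-1}" and e: "e \<in> {1..n-1}"
  shows "cat_below (apply_nni P s) v \<subseteq> cat_below s e \<longleftrightarrow> v + (if v \<in> RB P then 1 else 0) \<le> e"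
proof -
  let ?f = "\<lambda>q. s!(q-1)"
  have inj: "inj_on ?f {1..n}"
  proof (rule inj_onI)
    fix x y assume xy: "x \<in> {1..n}" "y \<in> {1..n}" "s!(x-1) = s!(y-1)"
    then have "x - 1 = y - 1" using ds ls nth_eq_iff_index_eq[of s "x-1" "y-1"] by auto
    then show "x = y" using xy by auto
  qed
  have S: "swap_pos P ` {1..v+1} \<subseteq> {1..n}" using swap_range[OF n3 vp] v by auto
  have G: "cat_below (apply_nni P s) v = ?f ` (swap_pos P ` {1..v+1})"
  proof -
    have v1: "v + 1 \<le> length (apply_nni P s)" using v n3 g_len by auto
    have "cat_below (apply_nni P s) v = (\<lambda>p. apply_nni P s ! (p-1)) ` {1..v+1}"
      unfolding cat_below_def using set_take_nth[OF v1] by simp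
    also have "\<dots> = (\<lambda>p. s!(swap_pos P p - 1)) ` {1..v+1}"
      using g_nth v by (intro image_cong) auto
    finally show ?thesis by (simp add: image_image)
  qed
  have Sx: "cat_below s e = ?f ` {1..e+1}"
  proof -
    have e1: "e + 1 \<le> length s" using e ls n3 by auto
    show ?thesis unfolding cat_below_def using set_take_nth[OF e1] by simp
  qed
  have "cat_below (apply_nni P s) v \<subseteq> cat_below s e \<longleftrightarrow> swap_pos P ` {1..v+1} \<subseteq> {1..e+1}"
  proof -
    have E: "{1..e+1} \<subseteq> {1..n}" using e n3 by auto
    show ?thesis unfolding G Sx using inj_image_subset_iff[OF inj S E] by simp
  qed
  also have "\<dots> \<longleftrightarrow> Max (swap_pos P ` {1..v+1}) \<le> e + 1"
  proof
    assume "swap_pos P ` {1..v+1} \<subseteq> {1..e+1}"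
    then show "Max (swap_pos P ` {1..v+1}) \<le> e + 1" by (intro Max.boundedI) auto
  next
    assume M: "Max (swap_pos P ` {1..v+1}) \<le> e + 1"
    show "swap_pos P ` {1..v+1} \<subseteq> {1..e+1}"
    proof
      fix q assume q: "q \<in> swap_pos P ` {1..v+1}"
      then have "q \<le> Max (swap_pos P ` {1..v+1})" by (intro Max_ge) auto
      then have "q \<le> e + 1" using M by (rule le_trans)
      moreover have "q \<ge> 1" using q S by auto
      ultimately show "q \<in> {1..e+1}" by simp
    qed
  qed
  also have "\<dots> \<longleftrightarrow> v + (if v \<in> RB P then 1 else 0) \<le> e"
    using Max_img[OF n3 vp, of v] v by auto
  finally show ?thesis .
qed

lemma coal_val: "coal_hist (apply_nni P s) s = {h \<in> seg 0 (n-1) (n-1). \<forall>j\<in>RB P. h j \<noteq> j}"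
proof -
  have dom: "{1..<length s} = {0<..n-1}" using ls n3 by auto
  have RBr: "RB P \<subseteq> {0<..n-1}"
  proof
    fix x assume "x \<in> RB P" then have "x \<in> {1..n-2}" using RB_range[OF n3 vp] by blast
    then show "x \<in> {0<..n-1}" by auto
  qed
  show ?thesis
  proof (rule set_eqI)
    fix h :: "nat \<Rightarrow> nat"
    show "h \<in> coal_hist (apply_nni P s) s \<longleftrightarrow> h \<in> {h \<in> seg 0 (n-1) (n-1). \<forall>j\<in>RB P. h j \<noteq> j}"
    proof
      assume H: "h \<in> coal_hist (apply_nni P s) s"
      have H1: "h \<in> {0<..n-1} \<rightarrow>\<^sub>E {0<..n-1}" using H unfolding coal_hist_def dom by blast
      have H2: "\<forall>v\<in>{0<..n-1}. cat_below (apply_nni P s) v \<subseteq> cat_below s (h v)"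
        using H unfolding coal_hist_def dom by blast
      have H3: "\<forall>v1\<in>{0<..n-1}. \<forall>v2\<in>{0<..n-1}. v2 \<le> v1 \<longrightarrow> h v2 \<le> h v1"
        using H unfolding coal_hist_def dom by blast
      have ext: "h \<in> extensional {0<..n-1}" and rng: "\<And>v. v \<in> {0<..n-1} \<Longrightarrow> h v \<in> {0<..n-1}"
        using H1 by (auto simp: PiE_iff)
      have c: "v + (if v \<in> RB P then 1 else 0) \<le> h v" if "v \<in> {0<..n-1}" for v
      proof -
        have hv: "h v \<in> {1..n-1}" using rng[OF that] by auto
        have vv: "v \<in> {1..n-1}" using that by auto
        show ?thesis using cat_below_iff[OF vv hv] H2 that by blast
      qed
      have "h \<in> seg 0 (n-1) (n-1)"
      proof (rule segI)
        show "h \<in> extensional {0<..n-1}" by (rule ext)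
        fix v assume v: "0 < v" "v \<le> n - 1"
        then have vin: "v \<in> {0<..n-1}" by simp
        show "v \<le> h v" using c[OF vin] by simp
        show "h v \<le> n - 1" using rng[OF vin] by simp
      next
        fix v1 v2 assume "0 < v2" "v2 \<le> v1" "v1 \<le> n - 1"
        then show "h v2 \<le> h v1" using H3 by simp
      qed
      moreover have "\<forall>j\<in>RB P. h j \<noteq> j"
      proof
        fix j assume "j \<in> RB P"
        then have "j \<in> {0<..n-1}" "j \<in> RB P" using RBr by auto
        then show "h j \<noteq> j" using c[of j] by simp
      qed
      ultimately show "h \<in> {h \<in> seg 0 (n-1) (n-1). \<forall>j\<in>RB P. h j \<noteq> j}" by simp
    next
      assume H: "h \<in> {h \<in> seg 0 (n-1) (n-1). \<forall>j\<in>RB P. h j \<noteq> j}"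
      then have hs: "h \<in> seg 0 (n-1) (n-1)" and h4: "\<forall>j\<in>RB P. h j \<noteq> j" by auto
      note D = segD[OF hs]
      have r: "h v \<in> {0<..n-1}" if "v \<in> {0<..n-1}" for v
        using D(2)[of v] D(3)[of v] that by auto
      have c: "cat_below (apply_nni P s) v \<subseteq> cat_below s (h v)" if "v \<in> {0<..n-1}" for v
      proof -
        have "v \<le> h v" using D(2)[of v] that by auto
        moreover have "v \<in> RB P \<Longrightarrow> h v \<noteq> v" using h4 by blast
        ultimately have "v + (if v \<in> RB P then 1 else 0) \<le> h v" by auto
        moreover have vv: "v \<in> {1..n-1}" using that by auto
        moreover have hv: "h v \<in> {1..n-1}" using r[OF that] by auto
        ultimately show ?thesis using cat_below_iff[OF vv hv] by blast
      qed
      have "h \<in> {0<..n-1} \<rightarrow>\<^sub>E {0<..n-1}" using D(1) r by (auto simp: PiE_iff)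
      moreover have "\<forall>v1\<in>{0<..n-1}. \<forall>v2\<in>{0<..n-1}. v2 \<le> v1 \<longrightarrow> h v2 \<le> h v1"
        using D(4) by auto
      ultimately show "h \<in> coal_hist (apply_nni P s) s"
        unfolding coal_hist_def dom using c by blast
    qed
  qed
qed

end

theorem proposition6:
  fixes s :: "'a list" and n k :: nat and P :: "nat set set"
  assumes "n \<ge> 3" and "length s = n" and "distinct s"
    and "valid_nni_pairs n P" and "card P = k" and "k \<ge> 1"
  shows "\<exists>i :: nat \<Rightarrow> nat.
     (\<forall>a\<in>{1..k}. \<forall>b\<in>{1..k}. a < b \<longrightarrow> i a < i b) \<and> 0 < i 1 \<and> i k < n - 1 \<and>
     roadblock (apply_nni P s) s = (\<lambda>j. (i j, i j)) ` {1..k} \<and>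
     real (card (coal_hist (apply_nni P s) s)) =
       catalan (n - 1) +
       (\<Sum>l = 1..k. (-1) ^ l *
          (\<Sum>J \<in> {J. J \<subseteq> {1..k} \<and> card J = l}. chain_prod n (map i (sorted_list_of_set J))))"
proof -
  note n3 = assms(1) and ls = assms(2) and ds = assms(3) and vp = assms(4)
  have cRB: "card (RB P) = k" using card_RB[OF n3 vp] assms(5) by simp
  have RBr: "RB P \<subseteq> {1..n-2}" by (rule RB_range[OF n3 vp])
  have finRB: "finite (RB P)" using RBr finite_subset by blast
  define xs0 where "xs0 = sorted_list_of_set (RB P)"
  define i where "i = (\<lambda>a. xs0 ! (a - 1))"
  have lx: "length xs0 = k" unfolding xs0_def using cRB by simp
  have sx: "sorted_wrt (<) xs0" unfolding xs0_def by (rule strict_sorted_list_of_set)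
  have setx: "set xs0 = RB P" unfolding xs0_def using finRB by simp
  have mono: "\<forall>a\<in>{1..k}. \<forall>b\<in>{1..k}. a < b \<longrightarrow> i a < i b"
  proof (intro ballI impI)
    fix a b assume "a \<in> {1..k}" "b \<in> {1..k}" "a < b"
    then show "i a < i b" unfolding i_def using sorted_wrt_nth_less[OF sx, of "a-1" "b-1"] lx by auto
  qed
  have img: "i ` {1..k} = RB P"
  proof -
    have "i ` {1..k} = (\<lambda>j. xs0 ! j) ` {..<k}"
    proof safe
      fix a assume "a \<in> {1..k}" then show "i a \<in> (\<lambda>j. xs0 ! j) ` {..<k}" unfolding i_def by auto
    next
      fix j assume "j < k" then show "xs0 ! j \<in> i ` {1..k}" unfolding i_def
        by (intro image_eqI[of _ _ "Suc j"]) auto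
    qed
    also have "\<dots> = set xs0" using lx by (auto simp: in_set_conv_nth)
    finally show ?thesis using setx by simp
  qed
  have iR: "a \<in> {1..k} \<Longrightarrow> i a \<in> {1..n-2}" for a using img RBr by blast
  have i1: "0 < i 1" using iR[of 1] assms(6) by auto
  have ik: "i k < n - 1" using iR[of k] assms(6) n3 by auto
  have rb: "roadblock (apply_nni P s) s = (\<lambda>j. (i j, i j)) ` {1..k}"
    unfolding roadblock_val[OF n3 vp ls ds] img[symmetric] by (simp add: image_image)
  define U where "U = seg 0 (n-1) (n-1)"
  define A where "A = (\<lambda>a. {h \<in> U. h (i a) = i a})"
  have finU: "finite U" unfolding U_def by (rule finite_seg)
  have coal: "coal_hist (apply_nni P s) s = U - (\<Union>a\<in>{1..k}. A a)"
    unfolding coal_val[OF n3 vp ls ds] U_def A_def img[symmetric] by auto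
  have sub: "(\<Union>a\<in>{1..k}. A a) \<subseteq> U" unfolding A_def by auto
  have cU: "real (card U) = catalan (n - 1)" unfolding U_def using card_seg_catalan[of 0 "n-1"] by simp
  interpret IE: Incl_Excl finite "\<lambda>S. real (card S)"
    by unfold_locales (auto simp: card_Un_disjnt)
  define f where "f = (\<lambda>J. chain_prod n (map i (sorted_list_of_set J)))"
  define S where "S = {B. B \<subseteq> {1..k} \<and> B \<noteq> {}}"
  have ie: "real (card (\<Union>a\<in>{1..k}. A a)) = (\<Sum>B\<in>S. (- 1) ^ (card B + 1) * real (card (\<Inter> (A ` B))))"
    unfolding S_def by (rule IE.restricted_indexed) (auto simp: A_def intro: finite_subset[OF _ finU])
  have inter: "real (card (\<Inter> (A ` B))) = f B" if B: "B \<in> S" for B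
  proof -
    have Bs: "B \<subseteq> {1..k}" "B \<noteq> {}" using B unfolding S_def by auto
    have finB: "finite B" using Bs(1) finite_subset by blast
    let ?ys = "map i (sorted_list_of_set B)"
    have sety: "set ?ys = i ` B" using finB by simp
    have "\<Inter> (A ` B) = {h \<in> U. \<forall>x\<in>set ?ys. h x = x}"
      unfolding sety A_def using Bs(2) by auto
    moreover have "sorted_wrt (<) ?ys"
      unfolding sorted_wrt_map
    proof (rule sorted_wrt_mono_rel[OF _ strict_sorted_list_of_set])
      fix x y assume "x \<in> set (sorted_list_of_set B)" "y \<in> set (sorted_list_of_set B)" "x < y"
      then show "i x < i y" using mono Bs(1) finB by auto
    qed
    moreover have "\<forall>x\<in>set ?ys. 0 < x \<and> x \<le> n - 1"
      using iR Bs(1) sety by fastforce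
    ultimately have "real (card (\<Inter> (A ` B))) = gp 0 (n-1) ?ys"
      using card_fix[of ?ys 0 "n-1"] unfolding U_def by simp
    then show ?thesis unfolding f_def chain_prod_gp by simp
  qed
  have finS: "finite S" unfolding S_def by simp
  have grp: "(\<Sum>B\<in>S. (- 1) ^ card B * f B) = (\<Sum>l = 1..k. (-1) ^ l * (\<Sum>J \<in> {J. J \<subseteq> {1..k} \<and> card J = l}. f J))"
  proof -
    have cS: "card ` S \<subseteq> {1..k}"
    proof
      fix c assume "c \<in> card ` S"
      then obtain B where B: "B \<subseteq> {1..k}" "B \<noteq> {}" "c = card B" unfolding S_def by auto
      have "finite B" using B(1) finite_subset by blast
      then have "c \<ge> 1" using B by (simp add: Suc_leI card_gt_0_iff)
      moreover have "c \<le> k" using B card_mono[OF _ B(1)] by simp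
      ultimately show "c \<in> {1..k}" by simp
    qed
    have "(\<Sum>B\<in>S. (- 1) ^ card B * f B) = (\<Sum>l = 1..k. \<Sum>B\<in>{B \<in> S. card B = l}. (- 1) ^ card B * f B)"
      using sum.group[OF finS _ cS, of "\<lambda>B. (- 1) ^ card B * f B"] by simp
    also have "\<dots> = (\<Sum>l = 1..k. (-1) ^ l * (\<Sum>J \<in> {J. J \<subseteq> {1..k} \<and> card J = l}. f J))"
    proof (rule sum.cong[OF refl])
      fix l assume l: "l \<in> {1..k}"
      have "{B \<in> S. card B = l} = {J. J \<subseteq> {1..k} \<and> card J = l}"
        unfolding S_def using l by auto
      then show "(\<Sum>B\<in>{B \<in> S. card B = l}. (- 1) ^ card B * f B) = (-1) ^ l * (\<Sum>J \<in> {J. J \<subseteq> {1..k} \<and> card J = l}. f J)"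
        by (simp add: sum_distrib_left)
    qed
    finally show ?thesis .
  qed
  have "real (card (coal_hist (apply_nni P s) s)) = real (card U) - real (card (\<Union>a\<in>{1..k}. A a))"
    unfolding coal using card_Diff_subset[OF finite_subset[OF sub finU] sub] card_mono[OF finU sub] by simp
  also have "\<dots> = catalan (n-1) - (\<Sum>B\<in>S. (- 1) ^ (card B + 1) * f B)"
    unfolding cU ie using inter by simp
  also have "\<dots> = catalan (n-1) + (\<Sum>B\<in>S. (- 1) ^ card B * f B)"
    by (simp add: sum_negf[symmetric])
  finally have cnt: "real (card (coal_hist (apply_nni P s) s)) = catalan (n - 1) +
       (\<Sum>l = 1..k. (-1) ^ l * (\<Sum>J \<in> {J. J \<subseteq> {1..k} \<and> card J = l}. chain_prod n (map i (sorted_list_of_set J))))"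
    using grp unfolding f_def by simp
  show ?thesis using mono i1 ik rb cnt by blast
qed

end
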